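(* Let $M$ be a smooth manifold, $Y$ a complex manifold and $\mathcal{F}$ a holomorphic foliation on $Y$. The first-order differential relation $\mathcal{R}_{\mathbb{C}Tr}\subseteq J^1(M,Y)$ consisting of 1-jets $(x,y,L)$, $L:T_xM\to T_yY$, such that $\pi\circ L:T_xM\to N_y\mathcal{F}$ is a $\mathbb{C}$-epimorphism (so that its $C^1$ solutions are exactly the maps $\mathbb{C}$-transverse to $\mathcal{F}$) is ample in the coordinate directions.
   Context: $N\mathcal{F}=TY/T\mathcal{F}$ and $\pi:TY\to N\mathcal{F}$ is the projection. An $\mathbb{R}$-linear map $\Phi:V\to W$ from a real vector space to a complex vector space is a $\mathbb{C}$-epimorphism if $z\otimes v\mapsto z\Phi(v)$, $\mathbb{C}\otimes V\to W$, is surjective. A map $f:M\to Y$ is $\mathbb{C}$-transverse to $\mathcal{F}$ if $\pi\circ df$ is a $\mathbb{C}$-epimorphism at every point. A relation $\mathcal{R}\subseteq J^1(M,Y)$ is ample in the coordinate directions if, in local coordinates $x_1,\dots,x_n$ on $M$, for every $j$ and every fixed choice of $(x,y)$ and of all partial derivatives except the $j$-th, the set of values $v$ of the $j$-th partial derivative for which the resulting jet lies in $\mathcal{R}$ is either empty or has the property that the convex hull of each of its path components is the whole space. *)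

theory Defs
  imports "HOL-Analysis.Analysis"
begin

text \<open>An R-linear map Phi from R^n (standard basis indexed by 'n) to a complex
  vector space W = complex^'q, given by its values c i = Phi(e_i), is a
  C-epimorphism iff z (x) v |-> z Phi(v), C (x) R^n -> W, is surjective.
  Since C (x) R^n has C-basis 1 (x) e_i, its elements are sums of z_i (x) e_i.\<close>
definition C_epi :: "('n::finite \<Rightarrow> complex^'q) \<Rightarrow> bool" where
  "C_epi c \<longleftrightarrow> (\<forall>w::complex^'q. \<exists>z::'n \<Rightarrow> complex. w = (\<Sum>i\<in>UNIV. z i *s c i))"

text \<open>The fibre of R_CTr in local coordinates: x_1..x_n on M (index type 'n),
  T_yY = complex^'m, and pi_y : T_yY -> N_yF a surjective complex-linear map,
  represented by the complex matrix P. A 1-jet with partial derivatives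
  L i = df(d/dx_i) lies in R_CTr iff pi o L is a C-epimorphism.\<close>
definition R_CTr :: "complex^'m^'q \<Rightarrow> ('n::finite \<Rightarrow> complex^'m) \<Rightarrow> bool" where
  "R_CTr P L \<longleftrightarrow> C_epi (\<lambda>i. P *v L i)"

end

theory Submission
  imports Defs
begin

lemma scaleR_smult_c: "(r::real) *\<^sub>R (x::complex^'k) = complex_of_real r *s x"
  unfolding vec_eq_iff vector_scaleR_component vector_smult_component
  by (simp add: scaleR_conv_of_real)

lemma spanA:
  fixes u :: "'n \<Rightarrow> complex^'q" and N :: "'n set"
  assumes sp: "\<forall>w. \<exists>z c. w = (\<Sum>i\<in>N. z i *s u i) + c *s p0"
    and p: "p = (\<Sum>i\<in>N. a i *s u i) + g *s p0" and g: "g \<noteq> 0"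
  shows "\<forall>w. \<exists>z c. w = (\<Sum>i\<in>N. z i *s u i) + c *s p"
proof
  fix w
  obtain z c where w: "w = (\<Sum>i\<in>N. z i *s u i) + c *s p0" using sp by blast
  have "w = (\<Sum>i\<in>N. (z i - c / g * a i) *s u i) + (c / g) *s p"
  proof (subst vec_eq_iff, rule allI)
    fix k
    have "((\<Sum>i\<in>N. (z i - c / g * a i) *s u i) + (c / g) *s p) $ k
      = (\<Sum>i\<in>N. z i * u i $ k) - (c/g) * (\<Sum>i\<in>N. a i * u i $ k)
        + (c/g) * ((\<Sum>i\<in>N. a i * u i $ k) + g * p0 $ k)"
      by (simp add: p sum_subtractf sum_distrib_left algebra_simps)
    also have "\<dots> = w $ k" using g by (simp add: w field_simps)
    finally show "w $ k = ((\<Sum>i\<in>N. (z i - c / g * a i) *s u i) + (c / g) *s p) $ k" by simp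
  qed
  then show "\<exists>z c. w = (\<Sum>i\<in>N. z i *s u i) + c *s p"
    by (intro exI[of _ "\<lambda>i. z i - c / g * a i"] exI[of _ "c / g"])
qed

lemma spanB:
  fixes u :: "'n \<Rightarrow> complex^'q" and N :: "'n set"
  assumes sp0: "\<forall>w. \<exists>z c. w = (\<Sum>i\<in>N. z i *s u i) + c *s p0"
    and sp: "\<forall>w. \<exists>z c. w = (\<Sum>i\<in>N. z i *s u i) + c *s p"
  shows "\<exists>a g. g \<noteq> 0 \<and> p = (\<Sum>i\<in>N. a i *s u i) + g *s p0"
proof -
  obtain z b where pz: "p = (\<Sum>i\<in>N. z i *s u i) + b *s p0" using sp0 by blast
  show ?thesis
  proof (cases "b = 0")
    case False then show ?thesis using pz by blast
  next
    case True
    obtain c d where p0: "p0 = (\<Sum>i\<in>N. c i *s u i) + d *s p" using sp by blast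
    have "p = (\<Sum>i\<in>N. (z i - c i - d * z i) *s u i) + 1 *s p0"
    proof (subst vec_eq_iff, rule allI)
      fix k
      have pk: "p $ k = (\<Sum>i\<in>N. z i * u i $ k)" using pz True by simp
      have p0k: "p0 $ k = (\<Sum>i\<in>N. c i * u i $ k) + d * p $ k" using p0 by simp
      have "((\<Sum>i\<in>N. (z i - c i - d * z i) *s u i) + 1 *s p0) $ k
          = (\<Sum>i\<in>N. z i * u i $ k) - (\<Sum>i\<in>N. c i * u i $ k) - d * (\<Sum>i\<in>N. z i * u i $ k) + p0 $ k"
        by (simp add: sum_subtractf sum_distrib_left algebra_simps sum.distrib)
      also have "\<dots> = p $ k" unfolding p0k pk by (simp add: algebra_simps del: sum_distrib_left)
      finally show "p $ k = ((\<Sum>i\<in>N. (z i - c i - d * z i) *s u i) + 1 *s p0) $ k" by simp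
    qed
    then show ?thesis by (intro exI[of _ "\<lambda>i. z i - c i - d * z i"] exI[of _ 1]) simp
  qed
qed

theorem lemma3p2:
  fixes P :: "complex^'m^'q"
    and L :: "'n::finite \<Rightarrow> complex^'m"
    and j :: 'n
  assumes "surj (\<lambda>v. P *v v)"
  defines "S \<equiv> {v::complex^'m. R_CTr P (L(j := v))}"
  shows "S = {} \<or> (\<forall>v\<in>S. convex hull (path_component_set S v) = UNIV)"
proof (rule disjI2, intro ballI)
  define u where "u i = P *v L i" for i
  define N where "N = UNIV - {j}"
  define sp where "sp p \<longleftrightarrow> (\<forall>w. \<exists>z c. w = (\<Sum>i\<in>N. z i *s u i) + c *s p)" for p
  have sumsplit: "(\<Sum>i\<in>UNIV. z i *s (P *v (L(j:=v)) i)) = (\<Sum>i\<in>N. z i *s u i) + z j *s (P *v v)"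
    for z v
  proof -
    have "(\<Sum>i\<in>UNIV. z i *s (P *v (L(j:=v)) i)) = z j *s (P *v v) + (\<Sum>i\<in>N. z i *s (P *v (L(j:=v)) i))"
      unfolding N_def by (subst sum.remove[of UNIV j]) auto
    also have "(\<Sum>i\<in>N. z i *s (P *v (L(j:=v)) i)) = (\<Sum>i\<in>N. z i *s u i)"
      unfolding N_def u_def by (rule sum.cong) auto
    finally show ?thesis by (simp add: add.commute)
  qed
  have Sdef: "v \<in> S \<longleftrightarrow> sp (P *v v)" for v
  proof
    assume "v \<in> S"
    then have h: "\<forall>w. \<exists>z. w = (\<Sum>i\<in>UNIV. z i *s (P *v (L(j:=v)) i))"
      unfolding S_def R_CTr_def C_epi_def by simp
    show "sp (P *v v)" unfolding sp_def
    proof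
      fix w obtain z where "w = (\<Sum>i\<in>UNIV. z i *s (P *v (L(j:=v)) i))" using h by blast
      then show "\<exists>z c. w = (\<Sum>i\<in>N. z i *s u i) + c *s (P *v v)" using sumsplit by blast
    qed
  next
    assume h: "sp (P *v v)"
    show "v \<in> S" unfolding S_def R_CTr_def C_epi_def mem_Collect_eq
    proof
      fix w obtain z c where w: "w = (\<Sum>i\<in>N. z i *s u i) + c *s (P *v v)" using h sp_def by blast
      have "(\<Sum>i\<in>N. (z(j:=c)) i *s u i) = (\<Sum>i\<in>N. z i *s u i)"
        unfolding N_def by (rule sum.cong) auto
      then have "w = (\<Sum>i\<in>UNIV. (z(j:=c)) i *s (P *v (L(j:=v)) i))"
        using w sumsplit[of "z(j:=c)" v] by simp
      then show "\<exists>z. w = (\<Sum>i\<in>UNIV. z i *s (P *v (L(j:=v)) i))" by blast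
    qed
  qed
  fix v0 assume v0: "v0 \<in> S"
  define p0 where "p0 = P *v v0"
  have sp0: "sp p0" using v0 Sdef p0_def by simp
  have inS: "y \<in> S" if "P *v y = (\<Sum>i\<in>N. a i *s u i) + g *s p0" "g \<noteq> 0" for y a g
  proof -
    have "sp (P *v y)" unfolding sp_def by (rule spanA[OF sp0[unfolded sp_def] that])
    then show ?thesis using Sdef by simp
  qed
  have pc: "path_component S v0 y" if y: "y \<in> S" for y
  proof -
    obtain a g where g: "g \<noteq> 0" and py: "P *v y = (\<Sum>i\<in>N. a i *s u i) + g *s p0"
      using spanB[OF sp0[unfolded sp_def], of "P *v y"] Sdef y sp_def by blast
    have seg: "closed_segment y (g *s v0) \<subseteq> S"
    proof
      fix x assume "x \<in> closed_segment y (g *s v0)"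
      then obtain t where x: "x = (1 - t) *\<^sub>R y + t *\<^sub>R (g *s v0)"
        unfolding closed_segment_def by blast
      have "P *v x = (\<Sum>i\<in>N. (complex_of_real (1 - t) * a i) *s u i) + g *s p0"
      proof (subst vec_eq_iff, rule allI)
        fix k
        have "(P *v x) $ k = complex_of_real (1 - t) * (P *v y) $ k + complex_of_real t * g * p0 $ k"
          unfolding x scaleR_smult_c p0_def
          by (simp add: matrix_vector_right_distrib matrix_vector_mult_diff_distrib vector_scalar_commute left_diff_distrib)
        also have "\<dots> = ((\<Sum>i\<in>N. (complex_of_real (1 - t) * a i) *s u i) + g *s p0) $ k"
          by (simp add: py sum_distrib_left algebra_simps)
        finally show "(P *v x) $ k = ((\<Sum>i\<in>N. (complex_of_real (1 - t) * a i) *s u i) + g *s p0) $ k" .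
      qed
      then show "x \<in> S" by (rule inS[of x "\<lambda>i. complex_of_real (1 - t) * a i" g, OF _ g])
    qed
    have c1: "path_component S y (g *s v0)"
      by (meson seg path_component_of_subset path_connected_component path_connected_segment
          ends_in_segment)
    define T where "T = (\<lambda>c. c *s v0) ` (- {0::complex})"
    have "path_connected T" unfolding T_def
    proof (rule path_connected_continuous_image)
      show "continuous_on (- {0}) (\<lambda>c::complex. c *s v0)"
        unfolding vector_scalar_mult_def by (intro continuous_intros)
      show "path_connected (- {0::complex})"
        by (rule path_connected_punctured_universe) simp
    qed
    moreover have "T \<subseteq> S"
    proof
      fix x assume "x \<in> T"
      then obtain c where c: "c \<noteq> 0" "x = c *s v0" unfolding T_def by blast
      have "P *v x = (\<Sum>i\<in>N. (\<lambda>_. 0) i *s u i) + c *s p0"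
        unfolding c(2) by (simp add: vector_scalar_commute p0_def)
      then show "x \<in> S" by (rule inS[OF _ c(1)])
    qed
    moreover have "g *s v0 \<in> T" unfolding T_def using g by blast
    moreover have "v0 \<in> T" unfolding T_def
      by (rule image_eqI[of _ _ 1]) (simp_all add: vec_eq_iff)
    ultimately have "path_component S (g *s v0) v0"
      by (meson path_component_of_subset path_connected_component)
    then show ?thesis using c1 path_component_trans path_component_sym by blast
  qed
  show "convex hull (path_component_set S v0) = UNIV"
  proof (rule set_eqI, simp)
    fix x
    obtain a b where px: "P *v x = (\<Sum>i\<in>N. a i *s u i) + b *s p0"
      using sp0 sp_def by blast
    define c where "c = complex_of_real (norm b + 1)"
    have nc: "norm c = norm b + 1" unfolding c_def by (simp add: norm_of_real)
    have bc1: "b + c \<noteq> 0"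
    proof
      assume "b + c = 0" then have "c = - b" by (simp add: add_eq_0_iff2)
      then show False using nc by simp
    qed
    have bc2: "b - c \<noteq> 0"
    proof
      assume "b - c = 0" then have "c = b" by simp
      then show False using nc by simp
    qed
    have x1: "x + c *s v0 \<in> S"
      by (rule inS[of _ a "b + c"]) (simp_all add: bc1 px p0_def vector_scalar_commute matrix_vector_right_distrib vec_eq_iff algebra_simps)
    have x2: "x - c *s v0 \<in> S"
      by (rule inS[of _ a "b - c"]) (simp_all add: bc2 bc2[simplified] px p0_def vector_scalar_commute matrix_vector_mult_diff_distrib vec_eq_iff algebra_simps)
    have m1: "x + c *s v0 \<in> convex hull (path_component_set S v0)"
      using pc[OF x1] by (intro hull_inc) simp
    have m2: "x - c *s v0 \<in> convex hull (path_component_set S v0)"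
      using pc[OF x2] by (intro hull_inc) simp
    have "(1/2) *\<^sub>R (x + c *s v0) + (1/2) *\<^sub>R (x - c *s v0) \<in> convex hull (path_component_set S v0)"
      by (rule convexD[OF convex_convex_hull m1 m2]) auto
    moreover have "(1/2) *\<^sub>R (x + c *s v0) + (1/2) *\<^sub>R (x - c *s v0) = x"
      unfolding scaleR_smult_c by (simp add: vec_eq_iff algebra_simps)
    ultimately show "x \<in> convex hull (path_component_set S v0)" by simp
  qed
qed

end
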